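(* Let $S$ be a nondegenerate simplex in $\mathbb R^n$ with $S\subset Q_n\subset nS$, with vertices $x^{(1)},\dots,x^{(n+1)}$, and let $\lambda_j(x)=l_{1j}x_1+\dots+l_{nj}x_n+l_{n+1,j}$ ($1\le j\le n+1$) be its basic Lagrange polynomials. Then: (i) $\max_{x\in\mathrm{ver}(Q_n)}\lambda_j(x)=1$ for all $j=1,\dots,n+1$; (ii) $\max_{x\in\mathrm{ver}(Q_n)}(-\lambda_j(x))=\frac{n-1}{n+1}$ for all $j=1,\dots,n+1$; (iii) the same equalities as in (i) and (ii) hold with maxima taken over $x\in Q_n$; (iv) $c(S)=c(Q_n)=(\tfrac12,\dots,\tfrac12)$; (v) for every integer $k\ge0$, $\frac{1}{n^{k+1}}Q_n\subset\frac1{n^k}S\subset\frac1{n^k}Q_n$ and $n^kS\subset n^kQ_n\subset n^{k+1}S$, i.e. $\dots\subset\frac1{n^2}S\subset\frac1nQ_n\subset S\subset Q_n\subset nS\subset n^2Q_n\subset n^3S\subset\dots$; (vi) $\sum_{j=1}^{n+1}|l_{ij}|=2$ for $1\le i\le n$, and $\sum_{i=1}^{n}|l_{ij}|=\frac{2n}{n+1}$ for $1\le j\le n+1$; (vii) for $1\le j\le n+1$: $\sum_{i\le n,\ l_{ij}\ge0}l_{ij}=1-l_{n+1,j}$ and $\sum_{i\le n,\ l_{ij}<0}|l_{ij}|=\frac{n-1}{n+1}+l_{n+1,j}$; (viii) $Q_n\subset\bigcap_{j=1}^{n+1}D_j$, where $D_j=\{x\in\mathbb R^n: -\frac{n-1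}{n+1}\le\lambda_j(x)\le1\}$.
   Context: $Q_n=[0,1]^n$. For a convex body $\Omega$ and $\sigma>0$, $\sigma\Omega$ denotes the homothetic image of $\Omega$ with center at the center of gravity $c(\Omega)$ of $\Omega$ and ratio $\sigma$. For a nondegenerate simplex $S$ with vertices $x^{(j)}=(x^{(j)}_1,\dots,x^{(j)}_n)$, $1\le j\le n+1$, the vertex matrix $A$ is the $(n+1)\times(n+1)$ matrix whose $j$th row is $(x^{(j)}_1,\dots,x^{(j)}_n,1)$; writing $A^{-1}=(l_{ij})$, the basic Lagrange polynomials are $\lambda_j(x)=l_{1j}x_1+\dots+l_{nj}x_n+l_{n+1,j}$; they satisfy $\lambda_j(x^{(k)})=\delta_{jk}$. *)

theory Defs
  imports "HOL-Analysis.Analysis"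
begin

definition unit_cube :: "(real^'n) set" where
  "unit_cube = cbox 0 1"

definition cube_vertices :: "(real^'n) set" where
  "cube_vertices = {x. \<forall>i. x $ i = 0 \<or> x $ i = 1}"

definition center_of_gravity :: "(real^'n) set \<Rightarrow> real^'n" where
  "center_of_gravity \<Omega> = (1 / measure lebesgue \<Omega>) *\<^sub>R integral \<Omega> (\<lambda>x. x)"

definition homot :: "real \<Rightarrow> (real^'n) set \<Rightarrow> (real^'n) set" where
  "homot \<sigma> \<Omega> = (\<lambda>y. center_of_gravity \<Omega> + \<sigma> *\<^sub>R (y - center_of_gravity \<Omega>)) ` \<Omega>"

text \<open>Vertices are indexed by the type 'n option (n+1 elements); the coordinate
  columns of the vertex matrix are indexed by Some i, the last column (all ones) by None.\<close>
definition vertex_matrix :: "('n option \<Rightarrow> real^'n) \<Rightarrow> real^('n option)^('n option)" where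
  "vertex_matrix x = (\<chi> j k. case k of Some i \<Rightarrow> x j $ i | None \<Rightarrow> 1)"

text \<open>Coefficient l_{ij} of the inverse vertex matrix; row index Some i (i-th coordinate)
  or None (the (n+1)-st row), column index j (vertex).\<close>
definition lcoef :: "('n option \<Rightarrow> real^'n) \<Rightarrow> 'n option \<Rightarrow> 'n option \<Rightarrow> real" where
  "lcoef x i j = matrix_inv (vertex_matrix x) $ i $ j"

definition lagrange :: "('n option \<Rightarrow> real^'n) \<Rightarrow> 'n option \<Rightarrow> real^'n \<Rightarrow> real" where
  "lagrange x j y = (\<Sum>i\<in>UNIV. lcoef x (Some i) j * y $ i) + lcoef x None j"

definition simplex_of :: "('n option \<Rightarrow> real^'n) \<Rightarrow> (real^'n) set" where
  "simplex_of x = convex hull (range x)"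

end

theory Submission
  imports Defs
begin

lemma sum_option_UNIV: "(\<Sum>k\<in>(UNIV::'a::finite option set). f k) = f None + (\<Sum>i\<in>UNIV. f (Some i))"
  by (simp add: UNIV_option_conv sum.reindex)

lemma inv_props:
  fixes x :: "'n::finite option \<Rightarrow> real^'n"
  assumes "det (vertex_matrix x) \<noteq> 0"
  shows "vertex_matrix x ** matrix_inv (vertex_matrix x) = mat 1"
    "matrix_inv (vertex_matrix x) ** vertex_matrix x = mat 1"
proof -
  have "invertible (vertex_matrix x)" using assms invertible_det_nz by blast
  then have "\<exists>A'. vertex_matrix x ** A' = mat 1 \<and> A' ** vertex_matrix x = mat 1"
    unfolding invertible_def by blast
  from someI_ex[OF this] show "vertex_matrix x ** matrix_inv (vertex_matrix x) = mat 1"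
    "matrix_inv (vertex_matrix x) ** vertex_matrix x = mat 1"
    unfolding matrix_inv_def by auto
qed

lemma lam_vertex:
  fixes x :: "'n::finite option \<Rightarrow> real^'n"
  assumes "det (vertex_matrix x) \<noteq> 0"
  shows "lagrange x j (x k) = (if k = j then 1 else 0)"
proof -
  have "(vertex_matrix x ** matrix_inv (vertex_matrix x)) $ k $ j = mat 1 $ k $ j"
    using inv_props[OF assms] by simp
  then show ?thesis
    by (simp add: matrix_matrix_mult_def mat_def sum_option_UNIV vertex_matrix_def
        lagrange_def lcoef_def mult.commute add.commute)
qed

lemma col_props:
  fixes x :: "'n::finite option \<Rightarrow> real^'n"
  assumes "det (vertex_matrix x) \<noteq> 0"
  shows "(\<Sum>j\<in>UNIV. lcoef x k j) = (if k = None then 1 else 0)"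
    "(\<Sum>j\<in>UNIV. lcoef x k j * x j $ i) = (if k = Some i then 1 else 0)"
proof -
  have "(matrix_inv (vertex_matrix x) ** vertex_matrix x) $ k $ None = mat 1 $ k $ None"
    using inv_props[OF assms] by simp
  then show "(\<Sum>j\<in>UNIV. lcoef x k j) = (if k = None then 1 else 0)"
    by (simp add: matrix_matrix_mult_def mat_def vertex_matrix_def lcoef_def)
  have "(matrix_inv (vertex_matrix x) ** vertex_matrix x) $ k $ Some i = mat 1 $ k $ Some i"
    using inv_props[OF assms] by simp
  then show "(\<Sum>j\<in>UNIV. lcoef x k j * x j $ i) = (if k = Some i then 1 else 0)"
    by (simp add: matrix_matrix_mult_def mat_def vertex_matrix_def lcoef_def)
qed

lemma lam_comb:
  fixes x :: "'n::finite option \<Rightarrow> real^'n"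
  assumes "u + v = 1"
  shows "lagrange x j (u *\<^sub>R y + v *\<^sub>R z) = u * lagrange x j y + v * lagrange x j z"
proof -
  have "lagrange x j (u *\<^sub>R y + v *\<^sub>R z) = u * (\<Sum>i\<in>UNIV. lcoef x (Some i) j * y $ i)
     + v * (\<Sum>i\<in>UNIV. lcoef x (Some i) j * z $ i) + (u + v) * lcoef x None j"
    using assms by (simp add: lagrange_def sum.distrib sum_distrib_left algebra_simps)
  then show ?thesis by (simp add: lagrange_def algebra_simps)
qed

lemma swap_aux: "(\<Sum>j\<in>UNIV. \<Sum>i\<in>UNIV. (f i j::real) * y i) = (\<Sum>i\<in>UNIV. y i * (\<Sum>j\<in>UNIV. f i j))"
  by (subst sum.swap) (simp add: sum_distrib_left mult.commute)

lemma lam_sum: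
  fixes x :: "'n::finite option \<Rightarrow> real^'n"
  assumes "det (vertex_matrix x) \<noteq> 0"
  shows "(\<Sum>j\<in>UNIV. lagrange x j y) = 1"
proof -
  have "(\<Sum>j\<in>UNIV. lagrange x j y) = (\<Sum>j\<in>UNIV. \<Sum>i\<in>UNIV. lcoef x (Some i) j * y $ i)
        + (\<Sum>j\<in>UNIV. lcoef x None j)"
    by (simp add: lagrange_def sum.distrib)
  also have "\<dots> = (\<Sum>i\<in>UNIV. y $ i * (\<Sum>j\<in>UNIV. lcoef x (Some i) j)) + (\<Sum>j\<in>UNIV. lcoef x None j)"
    by (simp only: swap_aux)
  also have "\<dots> = 1" using col_props(1)[OF assms] by simp
  finally show ?thesis .
qed

lemma lam_repr:
  fixes x :: "'n::finite option \<Rightarrow> real^'n"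
  assumes "det (vertex_matrix x) \<noteq> 0"
  shows "(\<Sum>j\<in>UNIV. lagrange x j y *\<^sub>R x j) = y"
proof (rule vec_eq_iff[THEN iffD2, rule_format])
  fix i'
  have "(\<Sum>j\<in>UNIV. lagrange x j y *\<^sub>R x j) $ i' = (\<Sum>j\<in>UNIV. lagrange x j y * x j $ i')"
    by (simp add: sum_component)
  also have "\<dots> = (\<Sum>j\<in>UNIV. \<Sum>i\<in>UNIV. (lcoef x (Some i) j * x j $ i') * y $ i)
        + (\<Sum>j\<in>UNIV. lcoef x None j * x j $ i')"
    by (simp add: lagrange_def sum.distrib sum_distrib_right sum_distrib_left algebra_simps)
  also have "\<dots> = (\<Sum>i\<in>UNIV. y $ i * (\<Sum>j\<in>UNIV. lcoef x (Some i) j * x j $ i'))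
        + (\<Sum>j\<in>UNIV. lcoef x None j * x j $ i')"
    by (simp only: swap_aux)
  also have "\<dots> = y $ i'"
  proof -
    have h: "\<And>i. (\<Sum>j\<in>UNIV. lcoef x (Some i) j * x j $ i') = (if i = i' then 1 else 0)"
      using col_props(2)[OF assms] by simp
    have h2: "(\<Sum>j\<in>UNIV. lcoef x None j * x j $ i') = 0"
      using col_props(2)[OF assms] by simp
    show ?thesis by (simp add: h h2 if_distrib cong: if_cong)
  qed
  finally show "(\<Sum>j\<in>UNIV. lagrange x j y *\<^sub>R x j) $ i' = y $ i'" .
qed

lemma simplex_char:
  fixes x :: "'n::finite option \<Rightarrow> real^'n"
  assumes "det (vertex_matrix x) \<noteq> 0"
  shows "simplex_of x = {y. \<forall>j. lagrange x j y \<ge> 0}"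
proof
  show "simplex_of x \<subseteq> {y. \<forall>j. lagrange x j y \<ge> 0}"
    unfolding simplex_of_def
  proof (rule hull_minimal)
    show "range x \<subseteq> {y. \<forall>j. 0 \<le> lagrange x j y}"
      using lam_vertex[OF assms] by auto
    show "convex {y. \<forall>j. 0 \<le> lagrange x j y}"
      unfolding convex_def by (auto simp: lam_comb)
  qed
  show "{y. \<forall>j. lagrange x j y \<ge> 0} \<subseteq> simplex_of x"
  proof
    fix y assume y: "y \<in> {y. \<forall>j. lagrange x j y \<ge> 0}"
    have "(\<Sum>j\<in>UNIV. lagrange x j y *\<^sub>R x j) \<in> convex hull (range x)"
      by (rule convex_sum) (use y lam_sum[OF assms] in \<open>auto intro: hull_subset[THEN subsetD]\<close>)
    then show "y \<in> simplex_of x" using lam_repr[OF assms] by (simp add: simplex_of_def)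
  qed
qed

lemma cont_integrable:
  fixes f :: "real^'n::finite \<Rightarrow> 'b::euclidean_space"
  assumes "continuous_on UNIV f" "compact S"
  shows "f integrable_on S"
proof -
  have Sm: "S \<in> lmeasurable" using assms(2) lmeasurable_compact by blast
  have Sl: "S \<in> sets lebesgue" using Sm by (rule fmeasurableD)
  have cf: "continuous_on S f" using assms(1) by (rule continuous_on_subset) simp
  have "compact (f ` S)" using cf assms(2) by (rule compact_continuous_image)
  then have "bounded (f ` S)" by (rule compact_imp_bounded)
  then obtain B where B: "\<And>y. y \<in> S \<Longrightarrow> norm (f y) \<le> B"
    unfolding bounded_iff by auto
  have i1: "(\<lambda>_. 1::real) integrable_on S" using Sm lmeasurable_iff_integrable_on by blast
  show ?thesis
  proof (rule measurable_bounded_by_integrable_imp_integrable)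
    show "f \<in> borel_measurable (lebesgue_on S)"
      by (rule continuous_imp_measurable_on_sets_lebesgue[OF cf Sl])
    show "(\<lambda>_. B) integrable_on S"
      using integrable_on_cmult_right[OF i1, of B] by simp
    show "S \<in> sets lebesgue" by (rule Sl)
    show "norm (f y) \<le> B" if "y \<in> S" for y using B that .
  qed
qed

lemma has_integral_scale_image:
  fixes f :: "real^'n::finite \<Rightarrow> 'b::banach"
  assumes "bounded S" "t > 0" "((\<lambda>y. f (t *\<^sub>R y + c)) has_integral I) S"
  shows "(f has_integral (t ^ CARD('n)) *\<^sub>R I) ((\<lambda>y. t *\<^sub>R y + c) ` S)"
proof -
  obtain a where a: "S \<subseteq> cbox (-a) a" using bounded_subset_cbox_symmetric assms(1) by blast
  let ?F = "\<lambda>y. if y \<in> S then f (t *\<^sub>R y + c) else 0"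
  have F: "(?F has_integral I) (cbox (-a) a)" using assms(3) a by simp
  have h1: "((\<lambda>x. ?F ((1/t) *\<^sub>R x + (- ((1/t) *\<^sub>R c)))) has_integral (1 / (\<bar>1/t\<bar> ^ DIM(real^'n))) *\<^sub>R I)
     ((\<lambda>x. (1 / (1/t)) *\<^sub>R x + -((1 / (1/t)) *\<^sub>R (- ((1/t) *\<^sub>R c)))) ` cbox (-a) a)"
    by (rule has_integral_affinity[OF F]) (use assms in auto)
  have eq2: "(\<lambda>x. (1 / (1/t)) *\<^sub>R x + -((1 / (1/t)) *\<^sub>R (- ((1/t) *\<^sub>R c)))) = (\<lambda>x. t *\<^sub>R x + c)"
    using assms(2) by (auto simp: fun_eq_iff)
  have eq3: "1 / (\<bar>1/t\<bar> ^ DIM(real^'n)) = t ^ CARD('n)"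
    using assms(2) by (simp add: power_one_over)
  have eq4: "?F ((1/t) *\<^sub>R x + (- ((1/t) *\<^sub>R c))) = (if x \<in> (\<lambda>y. t *\<^sub>R y + c) ` S then f x else 0)" for x
  proof -
    have e: "t *\<^sub>R ((1/t) *\<^sub>R x + (- ((1/t) *\<^sub>R c))) + c = x" using assms(2) by (simp add: algebra_simps)
    have "((1/t) *\<^sub>R x + (- ((1/t) *\<^sub>R c)) \<in> S) = (x \<in> (\<lambda>y. t *\<^sub>R y + c) ` S)"
    proof
      assume "(1/t) *\<^sub>R x + (- ((1/t) *\<^sub>R c)) \<in> S" then show "x \<in> (\<lambda>y. t *\<^sub>R y + c) ` S"
        using e by (metis image_eqI)
    next
      assume "x \<in> (\<lambda>y. t *\<^sub>R y + c) ` S"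
      then obtain y where "y \<in> S" "x = t *\<^sub>R y + c" by auto
      then show "(1/t) *\<^sub>R x + (- ((1/t) *\<^sub>R c)) \<in> S" using assms(2) by (simp add: algebra_simps)
    qed
    then show ?thesis using e by simp
  qed
  have eq5: "(\<lambda>x. ?F ((1/t) *\<^sub>R x + (- ((1/t) *\<^sub>R c)))) = (\<lambda>x. if x \<in> (\<lambda>y. t *\<^sub>R y + c) ` S then f x else 0)"
    by (rule ext) (rule eq4)
  have "((\<lambda>x. if x \<in> (\<lambda>y. t *\<^sub>R y + c) ` S then f x else 0) has_integral (t ^ CARD('n)) *\<^sub>R I)
      ((\<lambda>x. t *\<^sub>R x + c) ` cbox (-a) a)" using h1 unfolding eq2 eq3 eq5 .
  moreover have "(\<lambda>y. t *\<^sub>R y + c) ` S \<subseteq> (\<lambda>x. t *\<^sub>R x + c) ` cbox (-a) a" using a by auto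
  ultimately show ?thesis by simp
qed

lemma limit_arg:
  fixes A m :: real and N :: nat
  assumes "\<And>t. 0 < t \<Longrightarrow> t < 1 \<Longrightarrow> A * (\<Sum>k<Suc N. t^k) \<le> m"
  shows "A * (real N + 1) \<le> m"
proof -
  have lim: "((\<lambda>t. A * (\<Sum>k<Suc N. t^k)) \<longlongrightarrow> A * (\<Sum>k<Suc N. 1^k)) (at_left (1::real))"
    by (intro tendsto_intros)
  have ev: "eventually (\<lambda>t. A * (\<Sum>k<Suc N. t^k) \<le> m) (at_left (1::real))"
    using eventually_at_left_real[of 0 1] by (rule eventually_mono) (use assms in auto)
  have "A * (\<Sum>k<Suc N. 1^k) \<le> m"
    by (rule tendsto_le[OF trivial_limit_at_left_real tendsto_const lim ev])
  then show ?thesis by (simp add: add.commute)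
qed

lemma measure_scale_image:
  fixes S :: "(real^'n::finite) set"
  assumes "compact S" "t > 0"
  shows "measure lebesgue ((\<lambda>y. t *\<^sub>R y + c) ` S) = t ^ CARD('n) * measure lebesgue S"
proof -
  have Sm: "S \<in> lmeasurable" using assms lmeasurable_compact by blast
  have "((\<lambda>_. 1::real) has_integral measure lebesgue S) S"
    using Sm lmeasurable_iff_integrable_on lmeasure_integral by (metis has_integral_integral)
  then have "((\<lambda>_. 1::real) has_integral t ^ CARD('n) *\<^sub>R measure lebesgue S) ((\<lambda>y. t *\<^sub>R y + c) ` S)"
    using has_integral_scale_image[of S t "\<lambda>_. 1::real"] assms compact_imp_bounded by auto
  moreover have "compact ((\<lambda>y. t *\<^sub>R y + c) ` S)"
    by (rule compact_continuous_image) (use assms in \<open>auto intro!: continuous_intros\<close>)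
  ultimately have "measure lebesgue ((\<lambda>y. t *\<^sub>R y + c) ` S) = t ^ CARD('n) *\<^sub>R measure lebesgue S"
    using lmeasurable_compact lmeasure_integral integral_unique by metis
  then show ?thesis by simp
qed

lemma integral_scale_image:
  fixes S :: "(real^'n::finite) set" and f :: "real^'n \<Rightarrow> real"
  assumes "compact S" "t > 0" "continuous_on UNIV f"
  shows "integral ((\<lambda>y. t *\<^sub>R y + c) ` S) f = t ^ CARD('n) * integral S (\<lambda>y. f (t *\<^sub>R y + c))"
proof -
  have "(\<lambda>y. f (t *\<^sub>R y + c)) integrable_on S"
    by (rule cont_integrable) (use assms in \<open>auto intro!: continuous_intros intro: continuous_on_compose2\<close>)
  then have "((\<lambda>y. f (t *\<^sub>R y + c)) has_integral integral S (\<lambda>y. f (t *\<^sub>R y + c))) S"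
    by (rule integrable_integral)
  then have "(f has_integral t ^ CARD('n) *\<^sub>R integral S (\<lambda>y. f (t *\<^sub>R y + c))) ((\<lambda>y. t *\<^sub>R y + c) ` S)"
    by (rule has_integral_scale_image[OF compact_imp_bounded[OF assms(1)] assms(2)])
  then show ?thesis by (simp add: integral_unique)
qed

lemma lam_cont: "continuous_on UNIV (lagrange x j)"
  unfolding lagrange_def by (intro continuous_intros)

lemma simplex_compact: "compact (simplex_of (x :: 'n::finite option \<Rightarrow> real^'n))"
  unfolding simplex_of_def by (intro compact_convex_hull finite_imp_compact) auto

lemma centroid_bary:
  fixes x :: "'n::finite option \<Rightarrow> real^'n"
  assumes nd: "det (vertex_matrix x) \<noteq> 0" and mpos: "measure lebesgue (simplex_of x) > 0"
  shows "lagrange x j (center_of_gravity (simplex_of x)) = 1 / (real CARD('n) + 1)"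
proof -
  define S where "S = simplex_of x"
  define N where "N = CARD('n)"
  define m where "m = measure lebesgue S"
  define A where "A = (\<lambda>j. integral S (lagrange x j))"
  have cS: "compact S" unfolding S_def by (rule simplex_compact)
  have Sm: "S \<in> lmeasurable" using cS lmeasurable_compact by blast
  have int1: "(\<lambda>_. 1::real) integrable_on S" using Sm lmeasurable_iff_integrable_on by blast
  have mint: "m = integral S (\<lambda>_. 1::real)" unfolding m_def using Sm lmeasure_integral by blast
  have intc: "(\<lambda>_. c::real) integrable_on S" for c
    using integrable_on_cmult_right[OF int1, of c] by simp
  have intc': "integral S (\<lambda>_. c::real) = c * m" for c
    using integral_mult_right[of S c "\<lambda>_. 1::real"] mint by simp
  have intlam: "lagrange x j integrable_on S" for j
    by (rule cont_integrable[OF lam_cont cS])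
  have Schar: "S = {y. \<forall>j. lagrange x j y \<ge> 0}" unfolding S_def by (rule simplex_char[OF nd])
  have key: "A j * (real N + 1) \<le> m" for j
  proof (rule limit_arg)
    fix t :: real assume t0: "0 < t" and t1: "t < 1"
    define g where "g = (\<lambda>y. t *\<^sub>R y + (1 - t) *\<^sub>R x j)"
    define H where "H = g ` S"
    have lamg: "lagrange x k (g y) = t * lagrange x k y + (1 - t) * (if j = k then 1 else 0)" for k y
      unfolding g_def by (simp add: lam_comb lam_vertex[OF nd])
    have HS: "H \<subseteq> S"
      unfolding H_def Schar using t0 t1 by (auto simp: lamg)
    have cov: "lagrange x j y < 1 - t" if "y \<in> S" "y \<notin> H" for y
    proof (rule ccontr)
      assume "\<not> lagrange x j y < 1 - t"
      then have ge: "lagrange x j y \<ge> 1 - t" by simp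
      define z where "z = (1/t) *\<^sub>R y + (1 - 1/t) *\<^sub>R x j"
      have lz: "lagrange x k z = (1/t) * lagrange x k y + (1 - 1/t) * (if j = k then 1 else 0)" for k
        unfolding z_def by (simp add: lam_comb lam_vertex[OF nd])
      have "z \<in> S"
        unfolding Schar
      proof (clarify)
        fix k
        show "0 \<le> lagrange x k z"
        proof (cases "j = k")
          case True
          have "(1/t) * lagrange x k y + (1 - 1/t) = (lagrange x j y - (1 - t)) / t"
            using t0 True by (simp add: field_simps)
          also have "\<dots> \<ge> 0" using ge t0 by simp
          finally show ?thesis using lz True by simp
        next
          case False
          then show ?thesis using lz that(1) t0 unfolding Schar by simp
        qed
      qed
      moreover have "g z = y" unfolding g_def z_def using t0 by (simp add: algebra_simps)
      ultimately show False using that(2) unfolding H_def by blast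
    qed
    define \<phi> where "\<phi> = (\<lambda>y. lagrange x j y - (1 - t))"
    have cH: "compact H" unfolding H_def g_def
      by (rule compact_continuous_image) (use cS in \<open>auto intro!: continuous_intros\<close>)
    have phicont: "continuous_on UNIV \<phi>" unfolding \<phi>_def by (intro continuous_intros lam_cont)
    have intH: "integral H \<phi> = t ^ N * (t * A j)"
    proof -
      have "integral H \<phi> = t ^ N * integral S (\<lambda>y. \<phi> (t *\<^sub>R y + (1 - t) *\<^sub>R x j))"
        unfolding H_def g_def N_def by (rule integral_scale_image[OF cS t0 phicont])
      also have "(\<lambda>y. \<phi> (t *\<^sub>R y + (1 - t) *\<^sub>R x j)) = (\<lambda>y. t * lagrange x j y)"
        using lamg unfolding g_def \<phi>_def by auto
      also have "integral S (\<lambda>y. t * lagrange x j y) = t * A j"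
        unfolding A_def by simp
      finally show ?thesis .
    qed
    have intR: "(\<lambda>y. if y \<in> H then \<phi> y else 0) integrable_on S"
      using integrable_restrict_Int[of H \<phi> S] HS cont_integrable[OF phicont cH]
      by (simp add: Int_absorb2)
    have intR2: "integral S (\<lambda>y. if y \<in> H then \<phi> y else 0) = integral H \<phi>"
      using integral_restrict_Int[of S H \<phi>] HS by (simp add: Int_absorb2)
    have "A j \<le> integral S (\<lambda>y. (1 - t) + (if y \<in> H then \<phi> y else 0))"
      unfolding A_def
    proof (rule integral_le[OF intlam integrable_add[OF intc intR]])
      fix y assume "y \<in> S"
      then show "lagrange x j y \<le> (1 - t) + (if y \<in> H then \<phi> y else 0)"
        using cov[of y] unfolding \<phi>_def by (cases "y \<in> H") auto
    qed
    also have "\<dots> = (1 - t) * m + t ^ N * (t * A j)"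
      using integral_add[OF intc intR] intc' intR2 intH by simp
    finally have "A j \<le> (1 - t) * m + t ^ (Suc N) * A j" by (simp add: algebra_simps)
    then have "A j * (1 - t ^ Suc N) \<le> (1 - t) * m" by (simp add: algebra_simps)
    moreover have od: "1 - t ^ Suc N = (1 - t) * (\<Sum>k<Suc N. t^k)" by (rule one_diff_power_eq)
    moreover have "(1 - t) * (A j * (\<Sum>k<Suc N. t^k)) = A j * (1 - t ^ Suc N)"
      by (metis mult.left_commute od)
    ultimately have "(1 - t) * (A j * (\<Sum>k<Suc N. t^k)) \<le> (1 - t) * m" by linarith
    then show "A j * (\<Sum>k<Suc N. t^k) \<le> m" using t1 by simp
  qed
  have sumA: "(\<Sum>j\<in>UNIV. A j) = m"
  proof -
    have "(\<Sum>j\<in>UNIV. A j) = integral S (\<lambda>y. \<Sum>j\<in>UNIV. lagrange x j y)"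
      unfolding A_def by (rule integral_sum[symmetric]) (auto intro: intlam)
    also have "\<dots> = m" using lam_sum[OF nd] mint by simp
    finally show ?thesis .
  qed
  have Aeq: "A j = m / (real N + 1)" for j
  proof (rule sum_mono_inv[of A "UNIV :: 'n option set" "\<lambda>_. m / (real N + 1)"])
    show "sum A UNIV = (\<Sum>j\<in>(UNIV::'n option set). m / (real N + 1))"
      using sumA by (simp add: N_def add.commute)
    show "A i \<le> m / (real N + 1)" for i
      using key[of i] by (simp add: field_simps)
  qed auto
  have mpos': "m > 0" using mpos unfolding m_def S_def by simp
  have intid: "(\<lambda>y. y) integrable_on S" by (rule cont_integrable[OF continuous_on_id cS])
  have comp: "integral S (\<lambda>y. y $ i) = integral S (\<lambda>y. y) $ i" for i
    using integral_component_eq[OF intid, of "axis i 1"] by (simp add: cart_eq_inner_axis)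
  have intcomp: "(\<lambda>y. y $ i) integrable_on S" for i
    by (rule cont_integrable[OF _ cS]) (intro continuous_intros)
  have AJ: "A j = (\<Sum>i\<in>UNIV. lcoef x (Some i) j * integral S (\<lambda>y. y) $ i) + lcoef x None j * m"
  proof -
    have "A j = integral S (\<lambda>y. (\<Sum>i\<in>UNIV. lcoef x (Some i) j * y $ i)) + integral S (\<lambda>_. lcoef x None j)"
      unfolding A_def lagrange_def
      by (rule integral_add) (auto intro!: integrable_sum integrable_on_mult_right intcomp intc)
    also have "integral S (\<lambda>y. (\<Sum>i\<in>UNIV. lcoef x (Some i) j * y $ i)) = (\<Sum>i\<in>UNIV. lcoef x (Some i) j * integral S (\<lambda>y. y $ i))"
      by (subst integral_sum) (auto intro!: integrable_on_mult_right intcomp)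
    finally show ?thesis using comp intc' by simp
  qed
  have "lagrange x j (center_of_gravity S) = (\<Sum>i\<in>UNIV. lcoef x (Some i) j * integral S (\<lambda>y. y) $ i / m) + lcoef x None j"
    unfolding center_of_gravity_def m_def[symmetric] lagrange_def by simp
  moreover have "(\<Sum>i\<in>UNIV. lcoef x (Some i) j * integral S (\<lambda>y. y) $ i / m) = (\<Sum>i\<in>UNIV. lcoef x (Some i) j * integral S (\<lambda>y. y) $ i) / m"
    by (rule sum_divide_distrib[symmetric])
  ultimately have L: "lagrange x j (center_of_gravity S) = (\<Sum>i\<in>UNIV. lcoef x (Some i) j * integral S (\<lambda>y. y) $ i) / m + lcoef x None j"
    by linarith
  have "A j / m = (\<Sum>i\<in>UNIV. lcoef x (Some i) j * integral S (\<lambda>y. y) $ i) / m + lcoef x None j * m / m"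
    unfolding AJ by (rule add_divide_distrib)
  moreover have "lcoef x None j * m / m = lcoef x None j" using mpos' by simp
  ultimately have "lagrange x j (center_of_gravity S) = A j / m" using L by linarith
  moreover have "A j / m = 1 / (real N + 1)" using Aeq mpos' by simp
  ultimately have "lagrange x j (center_of_gravity S) = 1 / (real N + 1)" by (rule trans)
  then show ?thesis by (simp only: S_def N_def)
qed

lemma measure_cube: "measure lebesgue (cbox (0::real^'n::finite) 1) = 1"
proof -
  have ne: "cbox (0::real^'n) 1 \<noteq> {}"
  proof -
    have "(0::real^'n) \<in> cbox 0 1" by (simp add: mem_box_cart)
    then show ?thesis by blast
  qed
  have "measure lebesgue (cbox (0::real^'n) 1) = integral (cbox (0::real^'n) 1) (\<lambda>_. 1::real)"
    by (rule lmeasure_integral) simp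
  also have "\<dots> = Henstock_Kurzweil_Integration.content (cbox (0::real^'n) 1)" by simp
  also have "\<dots> = 1" using content_cbox_cart[OF ne] by simp
  finally show ?thesis .
qed

lemma cube_centroid: "center_of_gravity (unit_cube :: (real^'n::finite) set) = (\<chi> i. 1/2)"
proof -
  let ?Q = "cbox (0::real^'n) 1"
  let ?I = "integral ?Q (\<lambda>x. x)"
  have int: "(\<lambda>x. x) integrable_on ?Q" by (rule integrable_continuous) (rule continuous_on_id)
  then have hI: "((\<lambda>x. x) has_integral ?I) ?Q" by (rule integrable_integral)
  have "((\<lambda>x. (-1) *\<^sub>R x + 1) has_integral (1 / (\<bar>-1\<bar> ^ DIM(real^'n))) *\<^sub>R ?I)
     ((\<lambda>x. (1 / (-1)) *\<^sub>R x + -((1 / (-1)) *\<^sub>R 1)) ` ?Q)"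
    by (rule has_integral_affinity[OF hI]) simp
  moreover have "(\<lambda>x. (1 / (-1)) *\<^sub>R x + -((1 / (-1)) *\<^sub>R (1::real^'n))) ` ?Q = ?Q"
  proof -
    have "(\<lambda>x. (1 / (-1)) *\<^sub>R x + -((1 / (-1)) *\<^sub>R (1::real^'n))) = (\<lambda>x. 1 - x)"
      by (auto simp: fun_eq_iff)
    moreover have "(\<lambda>x. 1 - x) ` ?Q = ?Q"
    proof
      show "(\<lambda>x. 1 - x) ` ?Q \<subseteq> ?Q" by (auto simp: mem_box_cart)
      show "?Q \<subseteq> (\<lambda>x. 1 - x) ` ?Q"
      proof
        fix y assume "y \<in> ?Q"
        then have "1 - y \<in> ?Q" by (auto simp: mem_box_cart)
        moreover have "y = 1 - (1 - y)" by simp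
        ultimately show "y \<in> (\<lambda>x. 1 - x) ` ?Q" by blast
      qed
    qed
    ultimately show ?thesis by simp
  qed
  ultimately have "((\<lambda>x. 1 - x) has_integral ?I) ?Q" by simp
  moreover have "((\<lambda>x. 1 - x) has_integral (Henstock_Kurzweil_Integration.content ?Q *\<^sub>R 1 - ?I)) ?Q"
    by (rule has_integral_diff[OF has_integral_const hI])
  ultimately have "?I = Henstock_Kurzweil_Integration.content ?Q *\<^sub>R 1 - ?I" using has_integral_unique by blast
  moreover have "Henstock_Kurzweil_Integration.content ?Q = 1" using measure_cube lmeasure_integral[of ?Q] by simp
  ultimately have e: "?I = 1 - ?I" by simp
  have I: "?I = (1/2) *\<^sub>R (1::real^'n)"
  proof (rule vec_eq_iff[THEN iffD2, rule_format])
    fix i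
    have "?I $ i = 1 - ?I $ i" using e by (metis vector_minus_component one_index)
    then show "?I $ i = ((1/2) *\<^sub>R (1::real^'n)) $ i" by simp
  qed
  show ?thesis
    unfolding center_of_gravity_def unit_cube_def measure_cube I
    by (simp add: vec_eq_iff)
qed

lemma homot_eq: "center_of_gravity \<Omega> = h \<Longrightarrow> homot \<sigma> \<Omega> = (\<lambda>y. h + \<sigma> *\<^sub>R (y - h)) ` \<Omega>"
  by (simp add: homot_def)

lemma pos_le: "0 \<le> (y::real) \<Longrightarrow> y \<le> 1 \<Longrightarrow> a * y \<le> max a 0"
proof (cases "a \<ge> 0")
  case True
  assume "0 \<le> y" "y \<le> 1"
  then have "a * y \<le> a * 1" using True by (intro mult_left_mono) auto
  then show ?thesis by simp
next
  case False
  assume "0 \<le> y" "y \<le> 1"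
  then have "a * y \<le> 0" using False by (simp add: mult_nonpos_nonneg)
  then show ?thesis by simp
qed

lemma neg_le: "0 \<le> (y::real) \<Longrightarrow> y \<le> 1 \<Longrightarrow> - (a * y) \<le> max (- a) 0"
  using pos_le[of y "-a"] by simp

lemma tight:
  fixes f g :: "'a \<Rightarrow> real"
  assumes "finite A" "\<And>i. i \<in> A \<Longrightarrow> f i \<le> g i" "sum f A = sum g A" "i \<in> A"
  shows "f i = g i"
  using sum_mono_inv[OF assms(3) assms(2) assms(4) assms(1)] .

lemma card_opt: "card (UNIV :: 'a::finite option set) = Suc CARD('a)"
  by (simp add: UNIV_option_conv card_image)

lemma aux_arith:
  fixes P Qq L d :: real
  assumes "P + L = 1" "Qq - L = d"
  shows "(P - Qq) / 2 + L = (1 - d) / 2"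
proof -
  have e: "P - Qq = 1 - d - 2 * L" using assms by linarith
  show ?thesis unfolding e by (simp add: field_simps)
qed

lemma posneg: "max a 0 - max (-a) 0 = (a::real)" by (simp add: max_def)
lemma absposneg: "\<bar>a\<bar> = max a 0 + max (-a) 0" for a :: real by (simp add: max_def)

lemma cube_vertices_finite: "finite (cube_vertices :: (real^'n::finite) set)"
proof (rule finite_subset[OF _ finite_imageI])
  show "finite (UNIV :: ('n \<Rightarrow> bool) set)" by simp
  show "cube_vertices \<subseteq> (\<lambda>f. (\<chi> i. if f i then (1::real) else 0) :: real^'n) ` (UNIV :: ('n \<Rightarrow> bool) set)"
  proof
    fix v :: "real^'n" assume v: "v \<in> cube_vertices"
    have "v = (\<chi> i. if v $ i = 1 then 1 else 0)"
      using v by (auto simp: vec_eq_iff cube_vertices_def)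
    then show "v \<in> (\<lambda>f. (\<chi> i. if f i then (1::real) else 0) :: real^'n) ` UNIV"
      by (intro image_eqI[where x="\<lambda>i. v $ i = 1"]) auto
  qed
qed

lemma cube_vertices_sub: "cube_vertices \<subseteq> (unit_cube :: (real^'n::finite) set)"
proof
  fix v :: "real^'n" assume "v \<in> cube_vertices"
  then have v: "v $ i = 0 \<or> v $ i = 1" for i by (simp add: cube_vertices_def)
  have "0 \<le> v $ i \<and> v $ i \<le> 1" for i using v[of i] by auto
  then show "v \<in> unit_cube" by (simp add: unit_cube_def mem_box_cart)
qed

theorem theorem6p1:
  fixes x :: "'n::finite option \<Rightarrow> real^'n" and n :: nat
  defines "S \<equiv> simplex_of x"
    and "Q \<equiv> (unit_cube :: (real^'n) set)"
    and "lam \<equiv> lagrange x"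
    and "l \<equiv> lcoef x"
  assumes n_def: "n = CARD('n)"
    and nondeg: "det (vertex_matrix x) \<noteq> 0"
    and SQ: "S \<subseteq> Q"
    and QnS: "Q \<subseteq> homot (real n) S"
  shows
    "(\<forall>j. Max (lam j ` cube_vertices) = 1)
   \<and> (\<forall>j. Max ((\<lambda>y. - lam j y) ` cube_vertices) = (real n - 1) / (real n + 1))
   \<and> (\<forall>j. (\<exists>y\<in>Q. lam j y = 1) \<and> (\<forall>y\<in>Q. lam j y \<le> 1))
   \<and> (\<forall>j. (\<exists>y\<in>Q. - lam j y = (real n - 1) / (real n + 1))
          \<and> (\<forall>y\<in>Q. - lam j y \<le> (real n - 1) / (real n + 1)))
   \<and> center_of_gravity S = center_of_gravity Q
   \<and> center_of_gravity Q = (\<chi> i. 1 / 2)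
   \<and> (\<forall>k::nat. homot (1 / real n ^ (k + 1)) Q \<subseteq> homot (1 / real n ^ k) S
        \<and> homot (1 / real n ^ k) S \<subseteq> homot (1 / real n ^ k) Q
        \<and> homot (real n ^ k) S \<subseteq> homot (real n ^ k) Q
        \<and> homot (real n ^ k) Q \<subseteq> homot (real n ^ (k + 1)) S)
   \<and> (\<forall>i. (\<Sum>j\<in>UNIV. \<bar>l (Some i) j\<bar>) = 2)
   \<and> (\<forall>j. (\<Sum>i\<in>UNIV. \<bar>l (Some i) j\<bar>) = 2 * real n / (real n + 1))
   \<and> (\<forall>j. (\<Sum>i\<in>{i. l (Some i) j \<ge> 0}. l (Some i) j) = 1 - l None j
        \<and> (\<Sum>i\<in>{i. l (Some i) j < 0}. \<bar>l (Some i) j\<bar>) = (real n - 1) / (real n + 1) + l None j)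
   \<and> Q \<subseteq> (\<Inter>j. {y. - (real n - 1) / (real n + 1) \<le> lam j y \<and> lam j y \<le> 1})"
proof -
  have lamx: "lam = lagrange x" by (simp add: lam_def)
  have lx: "l = lcoef x" by (simp add: l_def)
  have Qc: "Q = cbox 0 1" by (simp add: Q_def unit_cube_def)
  have npos: "n > 0" using n_def by simp
  have rn: "real n > 0" using npos by simp
  have cardo: "card (UNIV :: 'n option set) = Suc n" using n_def card_opt by simp
  have xS: "x j \<in> S" for j unfolding S_def simplex_of_def by (rule hull_subset[THEN subsetD]) simp
  have xQ: "0 \<le> x j $ i \<and> x j $ i \<le> 1" for j i
    using SQ xS[of j] by (auto simp: Qc mem_box_cart)
  have Schar: "S = {y. \<forall>j. lagrange x j y \<ge> 0}" unfolding S_def by (rule simplex_char[OF nondeg])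
  have cS: "compact S" unfolding S_def by (rule simplex_compact)
  define cs where "cs = center_of_gravity S"
  have homS: "homot (real n) S = (\<lambda>y. real n *\<^sub>R y + (1 - real n) *\<^sub>R cs) ` S"
    unfolding homot_def cs_def[symmetric] by (rule image_cong) (auto simp: algebra_simps)
  have mpos: "measure lebesgue S > 0"
  proof (rule ccontr)
    assume "\<not> measure lebesgue S > 0"
    then have m0: "measure lebesgue S = 0" using measure_nonneg[of lebesgue S] by simp
    let ?T = "(\<lambda>y. real n *\<^sub>R y + (1 - real n) *\<^sub>R cs) ` S"
    have "measure lebesgue ?T = real n ^ CARD('n) * measure lebesgue S"
      by (rule measure_scale_image[OF cS rn])
    then have T0: "measure lebesgue ?T = 0" using m0 by simp
    have cT: "compact ?T"
      by (rule compact_continuous_image) (use cS in \<open>auto intro!: continuous_intros\<close>)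
    have "measure lebesgue Q \<le> measure lebesgue ?T"
      by (rule measure_mono_fmeasurable) (use QnS homS cT lmeasurable_compact Qc in auto)
    moreover have "measure lebesgue Q = 1" unfolding Qc by (rule measure_cube)
    ultimately show False using T0 by linarith
  qed
  have bary: "lagrange x j cs = 1 / (real n + 1)" for j
    using centroid_bary[OF nondeg] mpos n_def unfolding S_def cs_def by simp
  have lowQ: "- (real n - 1) / (real n + 1) \<le> lagrange x j y" if yQ: "y \<in> Q" for j y
  proof -
    obtain s where s: "s \<in> S" "y = real n *\<^sub>R s + (1 - real n) *\<^sub>R cs"
      using QnS yQ homS by auto
    have "lagrange x j y = real n * lagrange x j s + (1 - real n) * lagrange x j cs"
      unfolding s(2) by (rule lam_comb) simp
    moreover have "lagrange x j s \<ge> 0" using s(1) Schar by auto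
    ultimately have "lagrange x j y \<ge> (1 - real n) * (1 / (real n + 1))"
      using bary[of j] rn by simp
    then show ?thesis by (simp add: field_simps)
  qed
  define p where "p = (\<lambda>j. \<Sum>i\<in>UNIV. max (lcoef x (Some i) j) 0)"
  define q where "q = (\<lambda>j. \<Sum>i\<in>UNIV. max (- lcoef x (Some i) j) 0)"
  define LN where "LN = (\<lambda>j. lcoef x None j)"
  have upQ: "lagrange x j y \<le> p j + LN j" "- lagrange x j y \<le> q j - LN j" if "y \<in> Q" for j y
  proof -
    have y01: "0 \<le> y $ i \<and> y $ i \<le> 1" for i using that by (auto simp: Qc mem_box_cart)
    have "(\<Sum>i\<in>UNIV. lcoef x (Some i) j * y $ i) \<le> p j"
      unfolding p_def by (rule sum_mono) (use y01 pos_le in auto)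
    then show "lagrange x j y \<le> p j + LN j" by (simp add: lagrange_def LN_def)
    have "(\<Sum>i\<in>UNIV. - (lcoef x (Some i) j * y $ i)) \<le> q j"
      unfolding q_def by (rule sum_mono) (use y01 neg_le in auto)
    then show "- lagrange x j y \<le> q j - LN j" by (simp add: lagrange_def LN_def sum_negf)
  qed
  define vp where "vp = (\<lambda>j. (\<chi> i. if lcoef x (Some i) j \<ge> 0 then 1 else 0) :: real^'n)"
  define vm where "vm = (\<lambda>j. (\<chi> i. if lcoef x (Some i) j < 0 then 1 else 0) :: real^'n)"
  have vpc: "vp j \<in> cube_vertices" "vm j \<in> cube_vertices" for j
    by (auto simp: vp_def vm_def cube_vertices_def)
  have vpQ: "vp j \<in> Q" "vm j \<in> Q" for j using vpc cube_vertices_sub Q_def by blast+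
  have lvp: "lagrange x j (vp j) = p j + LN j" for j
    unfolding lagrange_def p_def LN_def vp_def by (auto intro!: sum.cong simp: max_def)
  have lvm: "- lagrange x j (vm j) = q j - LN j" for j
  proof -
    have "(\<Sum>i\<in>UNIV. lcoef x (Some i) j * (if lcoef x (Some i) j < 0 then 1 else 0)) = - q j"
      unfolding q_def sum_negf[symmetric] by (auto intro!: sum.cong simp: max_def)
    then show ?thesis unfolding lagrange_def vm_def LN_def by simp
  qed
  have E1: "q j - LN j \<le> (real n - 1) / (real n + 1)" for j
    using lowQ[OF vpQ(2), of j] lvm[of j] by (simp add: field_simps)
  have E2: "1 \<le> p j + LN j" for j
    using upQ(1)[OF SQ[THEN subsetD, OF xS[of j]], of j] lam_vertex[OF nondeg, of j j] by simp
  have sumrow: "(\<Sum>j\<in>UNIV. max (lcoef x (Some i) j) 0) = (\<Sum>j\<in>UNIV. max (- lcoef x (Some i) j) 0)" for i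
  proof -
    have "(\<Sum>j\<in>UNIV. max (lcoef x (Some i) j) 0) - (\<Sum>j\<in>UNIV. max (- lcoef x (Some i) j) 0)
        = (\<Sum>j\<in>UNIV. lcoef x (Some i) j)"
      by (simp add: sum_subtractf[symmetric] posneg)
    also have "\<dots> = 0" using col_props(1)[OF nondeg, of "Some i"] by simp
    finally show ?thesis by simp
  qed
  have E3: "1 \<le> (\<Sum>j\<in>UNIV. max (- lcoef x (Some i) j) 0)" for i
  proof -
    have "1 = (\<Sum>j\<in>UNIV. lcoef x (Some i) j * x j $ i)" using col_props(2)[OF nondeg, of "Some i" i] by simp
    also have "\<dots> \<le> (\<Sum>j\<in>UNIV. max (lcoef x (Some i) j) 0)"
      by (rule sum_mono) (use xQ pos_le in auto)
    finally show ?thesis using sumrow[of i] by simp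
  qed
  have sLN: "(\<Sum>j\<in>UNIV. LN j) = 1" using col_props(1)[OF nondeg, of None] by (simp add: LN_def)
  have sq: "(\<Sum>j\<in>UNIV. q j) = (\<Sum>i\<in>UNIV. \<Sum>j\<in>UNIV. max (- lcoef x (Some i) j) 0)"
    unfolding q_def by (rule sum.swap)
  have sp: "(\<Sum>j\<in>UNIV. p j) = (\<Sum>i\<in>UNIV. \<Sum>j\<in>UNIV. max (lcoef x (Some i) j) 0)"
    unfolding p_def by (rule sum.swap)
  have sq1: "(\<Sum>j\<in>UNIV. q j) \<ge> real n"
  proof -
    have "(\<Sum>i\<in>(UNIV::'n set). 1::real) \<le> (\<Sum>i\<in>UNIV. \<Sum>j\<in>UNIV. max (- lcoef x (Some i) j) 0)"
      by (rule sum_mono) (rule E3)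
    then show ?thesis using sq n_def by simp
  qed
  have sumconst: "(\<Sum>j\<in>(UNIV::'n option set). (real n - 1) / (real n + 1)) = real n - 1"
    using cardo rn by (simp add: field_simps)
  have sq2: "(\<Sum>j\<in>UNIV. q j - LN j) \<le> real n - 1"
  proof -
    have "(\<Sum>j\<in>UNIV. q j - LN j) \<le> (\<Sum>j\<in>(UNIV::'n option set). (real n - 1) / (real n + 1))"
      by (rule sum_mono) (rule E1)
    then show ?thesis using sumconst by simp
  qed
  have sqN: "(\<Sum>j\<in>UNIV. q j) = real n"
    using sq1 sq2 sLN by (simp add: sum_subtractf)
  have R2: "q j - LN j = (real n - 1) / (real n + 1)" for j
    by (rule tight[of UNIV]) (use E1 sumconst sqN sLN in \<open>auto simp: sum_subtractf\<close>)
  have R3a: "(\<Sum>j\<in>UNIV. max (- lcoef x (Some i) j) 0) = 1" for i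
  proof -
    have "(1::real) = (\<Sum>j\<in>UNIV. max (- lcoef x (Some i) j) 0)"
      by (rule tight[of UNIV "\<lambda>_. 1" _ i]) (use E3 sq sqN n_def in auto)
    then show ?thesis by simp
  qed
  have spN: "(\<Sum>j\<in>UNIV. p j) = real n"
    using sp sumrow R3a n_def by simp
  have R1: "p j + LN j = 1" for j
  proof -
    have "(1::real) = p j + LN j"
      by (rule tight[of UNIV "\<lambda>_. 1" _ j]) (use E2 spN sLN cardo in \<open>auto simp: sum.distrib\<close>)
    then show ?thesis by simp
  qed
  define h where "h = ((\<chi> i. 1 / 2) :: real^'n)"
  have cQ: "center_of_gravity Q = h" unfolding Q_def h_def by (rule cube_centroid)
  have lamh: "lagrange x j h = 1 / (real n + 1)" for j
  proof -
    have sl: "(\<Sum>i\<in>UNIV. lcoef x (Some i) j) = p j - q j"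
      unfolding p_def q_def by (simp add: sum_subtractf[symmetric] posneg)
    have "lagrange x j h = (\<Sum>i\<in>UNIV. lcoef x (Some i) j) / 2 + LN j"
      unfolding lagrange_def h_def LN_def by (simp add: sum_divide_distrib)
    also have "\<dots> = (p j - q j) / 2 + LN j" using sl by simp
    also have "\<dots> = (1 - (real n - 1) / (real n + 1)) / 2"
      by (rule aux_arith[OF R1[of j] R2[of j]])
    also have "\<dots> = 1 / (real n + 1)" using rn by (simp add: field_simps)
    finally show ?thesis .
  qed
  have csh: "cs = h"
  proof -
    have "cs = (\<Sum>j\<in>UNIV. lagrange x j cs *\<^sub>R x j)" by (rule lam_repr[OF nondeg, symmetric])
    also have "\<dots> = (\<Sum>j\<in>UNIV. lagrange x j h *\<^sub>R x j)" using bary lamh by simp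
    also have "\<dots> = h" by (rule lam_repr[OF nondeg])
    finally show ?thesis .
  qed
  have cSQ: "center_of_gravity S = center_of_gravity Q" using csh cQ cs_def by simp
  have hS: "homot \<sigma> S = (\<lambda>y. h + \<sigma> *\<^sub>R (y - h)) ` S" for \<sigma>
    by (rule homot_eq) (use csh cs_def in simp)
  have hQ: "homot \<sigma> Q = (\<lambda>y. h + \<sigma> *\<^sub>R (y - h)) ` Q" for \<sigma>
    by (rule homot_eq) (rule cQ)
  have QnS': "\<exists>s\<in>S. y = h + real n *\<^sub>R (s - h)" if "y \<in> Q" for y
    using QnS that hS by auto
  have upper: "lagrange x j y \<le> 1" if "y \<in> Q" for j y using upQ(1)[OF that, of j] R1[of j] by simp
  have upper2: "- lagrange x j y \<le> (real n - 1) / (real n + 1)" if "y \<in> Q" for j y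
    using upQ(2)[OF that, of j] R2[of j] by simp
  have C1: "\<forall>j. Max (lam j ` cube_vertices) = 1"
  proof
    fix j
    show "Max (lam j ` cube_vertices) = 1"
    proof (rule Max_eqI)
      show "finite (lam j ` cube_vertices)" by (rule finite_imageI[OF cube_vertices_finite])
      show "y \<le> 1" if "y \<in> lam j ` cube_vertices" for y
        using that upper cube_vertices_sub Q_def lamx by blast
      show "1 \<in> lam j ` cube_vertices" using vpc(1)[of j] lvp[of j] R1[of j] lamx by force
    qed
  qed
  have C2: "\<forall>j. Max ((\<lambda>y. - lam j y) ` cube_vertices) = (real n - 1) / (real n + 1)"
  proof
    fix j
    show "Max ((\<lambda>y. - lam j y) ` cube_vertices) = (real n - 1) / (real n + 1)"
    proof (rule Max_eqI)
      show "finite ((\<lambda>y. - lam j y) ` cube_vertices)" by (rule finite_imageI[OF cube_vertices_finite])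
      show "y \<le> (real n - 1) / (real n + 1)" if "y \<in> (\<lambda>y. - lam j y) ` cube_vertices" for y
        using that upper2 cube_vertices_sub Q_def lamx by blast
      show "(real n - 1) / (real n + 1) \<in> (\<lambda>y. - lam j y) ` cube_vertices"
        using vpc(2)[of j] lvm[of j] R2[of j] lamx by force
    qed
  qed
  have C3: "\<forall>j. (\<exists>y\<in>Q. lam j y = 1) \<and> (\<forall>y\<in>Q. lam j y \<le> 1)"
    using vpQ(1) lvp R1 upper lamx by metis
  have C4: "\<forall>j. (\<exists>y\<in>Q. - lam j y = (real n - 1) / (real n + 1))
          \<and> (\<forall>y\<in>Q. - lam j y \<le> (real n - 1) / (real n + 1))"
    using vpQ(2) lvm R2 upper2 lamx by metis
  have C5: "\<forall>k::nat. homot (1 / real n ^ (k + 1)) Q \<subseteq> homot (1 / real n ^ k) S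
        \<and> homot (1 / real n ^ k) S \<subseteq> homot (1 / real n ^ k) Q
        \<and> homot (real n ^ k) S \<subseteq> homot (real n ^ k) Q
        \<and> homot (real n ^ k) Q \<subseteq> homot (real n ^ (k + 1)) S"
  proof (intro allI conjI)
    fix k :: nat
    show "homot (1 / real n ^ k) S \<subseteq> homot (1 / real n ^ k) Q"
      unfolding hS hQ using SQ by (rule image_mono)
    show "homot (real n ^ k) S \<subseteq> homot (real n ^ k) Q"
      unfolding hS hQ using SQ by (rule image_mono)
    show "homot (1 / real n ^ (k + 1)) Q \<subseteq> homot (1 / real n ^ k) S"
    proof
      fix z assume "z \<in> homot (1 / real n ^ (k + 1)) Q"
      then obtain y where y: "y \<in> Q" "z = h + (1 / real n ^ (k + 1)) *\<^sub>R (y - h)" unfolding hQ by auto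
      obtain s where s: "s \<in> S" "y = h + real n *\<^sub>R (s - h)" using QnS'[OF y(1)] by auto
      have "z = h + ((1 / real n ^ (k + 1)) * real n) *\<^sub>R (s - h)" using y(2) s(2) by simp
      also have "(1 / real n ^ (k + 1)) * real n = 1 / real n ^ k" using rn by (simp add: field_simps)
      finally show "z \<in> homot (1 / real n ^ k) S" unfolding hS using s(1) by blast
    qed
    show "homot (real n ^ k) Q \<subseteq> homot (real n ^ (k + 1)) S"
    proof
      fix z assume "z \<in> homot (real n ^ k) Q"
      then obtain y where y: "y \<in> Q" "z = h + (real n ^ k) *\<^sub>R (y - h)" unfolding hQ by auto
      obtain s where s: "s \<in> S" "y = h + real n *\<^sub>R (s - h)" using QnS'[OF y(1)] by auto
      have "z = h + (real n ^ k * real n) *\<^sub>R (s - h)" using y(2) s(2) by simp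
      also have "real n ^ k * real n = real n ^ (k + 1)" by simp
      finally show "z \<in> homot (real n ^ (k + 1)) S" unfolding hS using s(1) by blast
    qed
  qed
  have C6: "\<forall>i. (\<Sum>j\<in>UNIV. \<bar>l (Some i) j\<bar>) = 2"
  proof
    fix i
    have "(\<Sum>j\<in>UNIV. \<bar>lcoef x (Some i) j\<bar>) = (\<Sum>j\<in>UNIV. max (lcoef x (Some i) j) 0) + (\<Sum>j\<in>UNIV. max (- lcoef x (Some i) j) 0)"
      by (simp add: absposneg sum.distrib)
    then show "(\<Sum>j\<in>UNIV. \<bar>l (Some i) j\<bar>) = 2" using sumrow[of i] R3a[of i] lx by simp
  qed
  have C7: "\<forall>j. (\<Sum>i\<in>UNIV. \<bar>l (Some i) j\<bar>) = 2 * real n / (real n + 1)"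
  proof
    fix j
    have "(\<Sum>i\<in>UNIV. \<bar>lcoef x (Some i) j\<bar>) = p j + q j"
      unfolding p_def q_def by (simp add: absposneg sum.distrib)
    also have "\<dots> = 1 + (real n - 1) / (real n + 1)" using R1[of j] R2[of j] by simp
    also have "\<dots> = 2 * real n / (real n + 1)" using rn by (simp add: field_simps)
    finally show "(\<Sum>i\<in>UNIV. \<bar>l (Some i) j\<bar>) = 2 * real n / (real n + 1)" using lx by simp
  qed
  have C8: "\<forall>j. (\<Sum>i\<in>{i. l (Some i) j \<ge> 0}. l (Some i) j) = 1 - l None j
        \<and> (\<Sum>i\<in>{i. l (Some i) j < 0}. \<bar>l (Some i) j\<bar>) = (real n - 1) / (real n + 1) + l None j"
  proof (intro allI conjI)
    fix j
    have "(\<Sum>i\<in>{i. lcoef x (Some i) j \<ge> 0}. lcoef x (Some i) j) = p j"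
    proof -
      have "(\<Sum>i\<in>{i. lcoef x (Some i) j \<ge> 0}. lcoef x (Some i) j)
          = (\<Sum>i\<in>{i \<in> UNIV. lcoef x (Some i) j \<ge> 0}. lcoef x (Some i) j)" by simp
      also have "\<dots> = (\<Sum>i\<in>UNIV. if lcoef x (Some i) j \<ge> 0 then lcoef x (Some i) j else 0)"
        by (rule sum.inter_filter) simp
      also have "\<dots> = p j" unfolding p_def by (rule sum.cong) (auto simp: max_def)
      finally show ?thesis .
    qed
    then show "(\<Sum>i\<in>{i. l (Some i) j \<ge> 0}. l (Some i) j) = 1 - l None j"
      using R1[of j] lx LN_def by simp
    have "(\<Sum>i\<in>{i. lcoef x (Some i) j < 0}. \<bar>lcoef x (Some i) j\<bar>) = q j"
    proof -
      have "(\<Sum>i\<in>{i. lcoef x (Some i) j < 0}. \<bar>lcoef x (Some i) j\<bar>)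
          = (\<Sum>i\<in>{i \<in> UNIV. lcoef x (Some i) j < 0}. \<bar>lcoef x (Some i) j\<bar>)" by simp
      also have "\<dots> = (\<Sum>i\<in>UNIV. if lcoef x (Some i) j < 0 then \<bar>lcoef x (Some i) j\<bar> else 0)"
        by (rule sum.inter_filter) simp
      also have "\<dots> = q j" unfolding q_def by (rule sum.cong) (auto simp: max_def)
      finally show ?thesis .
    qed
    then show "(\<Sum>i\<in>{i. l (Some i) j < 0}. \<bar>l (Some i) j\<bar>) = (real n - 1) / (real n + 1) + l None j"
      using R2[of j] lx LN_def by simp
  qed
  have C9: "Q \<subseteq> (\<Inter>j. {y. - (real n - 1) / (real n + 1) \<le> lam j y \<and> lam j y \<le> 1})"
    using lowQ upper lamx by blast
  show ?thesis
    using C1 C2 C3 C4 cSQ cQ C5 C6 C7 C8 C9 unfolding h_def by blast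
qed

end
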